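(* Let $(\Omega,\mathcal{A})$ be a measurable space, $\Theta:=\mathfrak{P}(\Omega)$ the set of all probability measures on it, and let $H_1,\dots,H_K\subseteq\Theta$ ($K\ge2$) be hypotheses with \textit{e}-variables $E_1,\dots,E_K$, where $E_k$ is an \textit{e}-variable for $H_k$. Let $F$ be a symmetric \textit{e}-merging function. For $\theta\in\Theta$ let $I_\theta:=\{k:\theta\in H_k\}$, $E_\theta:=F(E_k:k\in I_\theta)$, and for $R\subseteq\{1,\dots,K\}$ let $g_R(\theta):=|R\setminus I_\theta|$. For $R\subseteq\{1,\dots,K\}$ and $j\in\{1,2,\dots\}$ let \[ D^R(j):=\min_{I\subseteq\{1,\dots,K\}:\ |R\setminus I|<j}F(E_k:k\in I)\quad(\min\emptyset:=\infty), \] a random variable. Then: (a) pointwise on $\Omega$, $D^R(j)\le \inf_{\theta\in\Theta:\ g_R(\theta)<j}E_\theta$ for all $R$ and $j$, with equality for all $R,j$ if the map $\theta\mapsto I_\theta$ from $\Theta$ to the power set of $\{1,\dots,K\}$ is surjective; (b) for every $\theta\in\Theta$ and every $\alpha>0$, \[ Q_\theta\Bigl(\exists R\subseteq\{1,\dots,K\},\ \exists j\ge1:\ g_R(\theta)<j \text{ and } D^R(j)\ge\alpha\Bigr)\le 1/\alpha . \]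
   Context: An \textit{e}-variable for a hypothesis $H\subseteq\Theta$ is a nonnegative extended random variable $E$ with $\int E\,\mathrm{d}\theta\le 1$ for all $\theta\in H$. An \textit{e}-merging function is a Borel function $F:\bigcup_{n=0}^\infty[0,\infty]^n\to[0,\infty]$, increasing in each argument, mapping any finite sequence of \textit{e}-variables (for a fixed probability measure) to an \textit{e}-variable; $F$ of the empty sequence is $1$. It is symmetric if it does not depend on the order of its arguments. Here $Q_\theta=\theta$. *)

theory Defs
  imports "HOL-Probability.Probability"
begin

definition prob_measures :: "'a measure \<Rightarrow> 'a measure set" where
  "prob_measures M = {P. prob_space P \<and> sets P = sets M}"

definition is_evar :: "'a measure \<Rightarrow> 'a measure set \<Rightarrow> ('a \<Rightarrow> ennreal) \<Rightarrow> bool" where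
  "is_evar M H E \<longleftrightarrow> E \<in> borel_measurable M \<and> (\<forall>\<theta>\<in>H. (\<integral>\<^sup>+ x. E x \<partial>\<theta>) \<le> 1)"

text \<open>e-merging function F on finite sequences in [0,\<infinity>] (lists of ennreal).
  The merging property is tested on probability spaces whose sample space has type 'b.\<close>
definition is_emerging :: "'b itself \<Rightarrow> (ennreal list \<Rightarrow> ennreal) \<Rightarrow> bool" where
  "is_emerging (_::'b itself) F \<longleftrightarrow>
     F [] = 1
   \<and> (\<forall>xs ys. list_all2 (\<le>) xs ys \<longrightarrow> F xs \<le> F ys)
   \<and> (\<forall>n. (\<lambda>x. F (map x [0..<n])) \<in> borel_measurable (PiM {..<n} (\<lambda>_. borel)))
   \<and> (\<forall>(P::'b measure) (Es::nat \<Rightarrow> 'b \<Rightarrow> ennreal) n.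
        prob_space P \<longrightarrow>
        (\<forall>i<n. is_evar P {P} (Es i)) \<longrightarrow>
        is_evar P {P} (\<lambda>\<omega>. F (map (\<lambda>i. Es i \<omega>) [0..<n])))"

definition symmetric_fn :: "('c list \<Rightarrow> 'd) \<Rightarrow> bool" where
  "symmetric_fn F \<longleftrightarrow> (\<forall>xs ys. mset xs = mset ys \<longrightarrow> F xs = F ys)"

definition Fset :: "(ennreal list \<Rightarrow> ennreal) \<Rightarrow> (nat \<Rightarrow> 'a \<Rightarrow> ennreal) \<Rightarrow> nat set \<Rightarrow> 'a \<Rightarrow> ennreal" where
  "Fset F E I \<omega> = F (map (\<lambda>k. E k \<omega>) (sorted_list_of_set I))"

definition Ith :: "nat \<Rightarrow> (nat \<Rightarrow> 'a measure set) \<Rightarrow> 'a measure \<Rightarrow> nat set" where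
  "Ith K H \<theta> = {k \<in> {1..K}. \<theta> \<in> H k}"

definition gR :: "nat \<Rightarrow> (nat \<Rightarrow> 'a measure set) \<Rightarrow> nat set \<Rightarrow> 'a measure \<Rightarrow> nat" where
  "gR K H R \<theta> = card (R - Ith K H \<theta>)"

text \<open>D^R(j), minimum over I subset {1..K} with |R \ I| < j; the empty infimum is \<infinity>.\<close>
definition DR :: "(ennreal list \<Rightarrow> ennreal) \<Rightarrow> (nat \<Rightarrow> 'a \<Rightarrow> ennreal) \<Rightarrow> nat \<Rightarrow> nat set \<Rightarrow> nat \<Rightarrow> 'a \<Rightarrow> ennreal" where
  "DR F E K R j \<omega> = (INF I \<in> {I. I \<subseteq> {1..K} \<and> card (R - I) < j}. Fset F E I \<omega>)"

end

theory Submission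
  imports Defs
begin

lemma markov_aux:
  fixes f :: "'a \<Rightarrow> ennreal"
  assumes f: "f \<in> borel_measurable P" and int: "(\<integral>\<^sup>+ x. f x \<partial>P) \<le> 1" and a: "\<alpha> > 0"
  shows "emeasure P {x\<in>space P. ennreal \<alpha> \<le> f x} \<le> ennreal (1/\<alpha>)"
proof -
  let ?S = "{x\<in>space P. ennreal \<alpha> \<le> f x}"
  have S: "?S \<in> sets P" using f by measurable
  have "ennreal \<alpha> * emeasure P ?S = (\<integral>\<^sup>+ x. ennreal \<alpha> * indicator ?S x \<partial>P)"
    using S by (simp add: nn_integral_cmult_indicator)
  also have "\<dots> \<le> (\<integral>\<^sup>+ x. f x \<partial>P)"
    by (intro nn_integral_mono) (auto split: split_indicator)
  also have "\<dots> \<le> 1" by (rule int)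
  finally have 1: "ennreal \<alpha> * emeasure P ?S \<le> 1" .
  have "emeasure P ?S = ennreal (1/\<alpha>) * (ennreal \<alpha> * emeasure P ?S)"
    using a by (simp add: mult.assoc[symmetric] ennreal_mult''[symmetric])
  also have "\<dots> \<le> ennreal (1/\<alpha>) * 1" by (intro mult_left_mono 1) auto
  finally show ?thesis by simp
qed

theorem mainTheorem2:
  fixes M :: "'a measure" and K :: nat
    and H :: "nat \<Rightarrow> 'a measure set" and E :: "nat \<Rightarrow> 'a \<Rightarrow> ennreal"
    and F :: "ennreal list \<Rightarrow> ennreal"
  assumes K2: "K \<ge> 2"
    and H_sub: "\<forall>k\<in>{1..K}. H k \<subseteq> prob_measures M"
    and E_evar: "\<forall>k\<in>{1..K}. is_evar M (H k) (E k)"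
    and F_merge: "is_emerging TYPE('a) F"
    and F_sym: "symmetric_fn F"
  shows "(\<forall>\<omega>\<in>space M. \<forall>R. R \<subseteq> {1..K} \<longrightarrow> (\<forall>j::nat. j \<ge> 1 \<longrightarrow>
            DR F E K R j \<omega> \<le> (INF \<theta>\<in>{\<theta>\<in>prob_measures M. gR K H R \<theta> < j}. Fset F E (Ith K H \<theta>) \<omega>)))
       \<and> ((\<forall>I. I \<subseteq> {1..K} \<longrightarrow> (\<exists>\<theta>\<in>prob_measures M. Ith K H \<theta> = I)) \<longrightarrow>
          (\<forall>\<omega>\<in>space M. \<forall>R. R \<subseteq> {1..K} \<longrightarrow> (\<forall>j::nat. j \<ge> 1 \<longrightarrow>
            DR F E K R j \<omega> = (INF \<theta>\<in>{\<theta>\<in>prob_measures M. gR K H R \<theta> < j}. Fset F E (Ith K H \<theta>) \<omega>))))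
       \<and> (\<forall>\<theta>\<in>prob_measures M. \<forall>\<alpha>::real. \<alpha> > 0 \<longrightarrow>
            emeasure \<theta> {\<omega>\<in>space M. \<exists>R. R \<subseteq> {1..K} \<and> (\<exists>j::nat. j \<ge> 1 \<and>
               gR K H R \<theta> < j \<and> DR F E K R j \<omega> \<ge> ennreal \<alpha>)} \<le> ennreal (1 / \<alpha>))"
proof -
  have Ith_sub: "Ith K H \<theta> \<subseteq> {1..K}" for \<theta> by (auto simp: Ith_def)
  have DR_le: "DR F E K R j \<omega> \<le> Fset F E (Ith K H \<theta>) \<omega>" if "gR K H R \<theta> < j" for R j \<omega> \<theta>
    unfolding DR_def using that Ith_sub[of \<theta>] by (intro INF_lower) (auto simp: gR_def)
  have A: "DR F E K R j \<omega> \<le> (INF \<theta>\<in>{\<theta>\<in>prob_measures M. gR K H R \<theta> < j}. Fset F E (Ith K H \<theta>) \<omega>)"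
    for R j \<omega> by (rule INF_greatest) (use DR_le in auto)
  have B: "DR F E K R j \<omega> = (INF \<theta>\<in>{\<theta>\<in>prob_measures M. gR K H R \<theta> < j}. Fset F E (Ith K H \<theta>) \<omega>)"
    if surj: "\<forall>I. I \<subseteq> {1..K} \<longrightarrow> (\<exists>\<theta>\<in>prob_measures M. Ith K H \<theta> = I)" for R j \<omega>
  proof (rule antisym[OF A])
    show "(INF \<theta>\<in>{\<theta>\<in>prob_measures M. gR K H R \<theta> < j}. Fset F E (Ith K H \<theta>) \<omega>) \<le> DR F E K R j \<omega>"
      unfolding DR_def
    proof (rule INF_greatest)
      fix I assume "I \<in> {I. I \<subseteq> {1..K} \<and> card (R - I) < j}"
      then obtain \<theta> where "\<theta> \<in> prob_measures M" "Ith K H \<theta> = I" "card (R - I) < j"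
        using surj by blast
      then show "(INF \<theta>\<in>{\<theta>\<in>prob_measures M. gR K H R \<theta> < j}. Fset F E (Ith K H \<theta>) \<omega>) \<le> Fset F E I \<omega>"
        by (intro INF_lower2[of \<theta>]) (auto simp: gR_def)
    qed
  qed
  have C: "emeasure \<theta> {\<omega>\<in>space M. \<exists>R. R \<subseteq> {1..K} \<and> (\<exists>j::nat. j \<ge> 1 \<and>
               gR K H R \<theta> < j \<and> DR F E K R j \<omega> \<ge> ennreal \<alpha>)} \<le> ennreal (1 / \<alpha>)"
    if th: "\<theta> \<in> prob_measures M" and a: "\<alpha> > 0" for \<theta> \<alpha>
  proof -
    have ps: "prob_space \<theta>" and st: "sets \<theta> = sets M" using th by (auto simp: prob_measures_def)
    have sp: "space \<theta> = space M" using st by (rule sets_eq_imp_space_eq)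
    define L where "L = sorted_list_of_set (Ith K H \<theta>)"
    define n where "n = length L"
    define Es where "Es = (\<lambda>i. E (L ! i))"
    have finI: "finite (Ith K H \<theta>)" using Ith_sub[of \<theta>] finite_subset by blast
    have Lset: "set L = Ith K H \<theta>" using finI by (simp add: L_def)
    have ev: "is_evar \<theta> {\<theta>} (Es i)" if "i < n" for i
    proof -
      have k: "L ! i \<in> Ith K H \<theta>" using that Lset by (metis n_def nth_mem)
      hence k1: "L ! i \<in> {1..K}" and k2: "\<theta> \<in> H (L ! i)" by (auto simp: Ith_def)
      have "is_evar M (H (L ! i)) (E (L ! i))" using E_evar k1 by blast
      thus ?thesis using k2 measurable_cong_sets[OF st refl]
        by (auto simp: is_evar_def Es_def)
    qed
    have "is_evar \<theta> {\<theta>} (\<lambda>\<omega>. F (map (\<lambda>i. Es i \<omega>) [0..<n]))"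
      using F_merge ps ev unfolding is_emerging_def by blast
    moreover have "(\<lambda>\<omega>. F (map (\<lambda>i. Es i \<omega>) [0..<n])) = Fset F E (Ith K H \<theta>)"
      proof (rule ext)
      fix \<omega>
      have "map (\<lambda>i. Es i \<omega>) [0..<n] = map (\<lambda>k. E k \<omega>) (map (\<lambda>i. L ! i) [0..<length L])"
        by (simp add: Es_def n_def)
      also have "\<dots> = map (\<lambda>k. E k \<omega>) L" by (simp add: map_nth)
      finally show "F (map (\<lambda>i. Es i \<omega>) [0..<n]) = Fset F E (Ith K H \<theta>) \<omega>"
        by (simp add: Fset_def L_def)
    qed
    ultimately have ev2: "is_evar \<theta> {\<theta>} (Fset F E (Ith K H \<theta>))" by simp
    have "emeasure \<theta> {\<omega>\<in>space M. \<exists>R. R \<subseteq> {1..K} \<and> (\<exists>j::nat. j \<ge> 1 \<and>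
               gR K H R \<theta> < j \<and> DR F E K R j \<omega> \<ge> ennreal \<alpha>)}
        \<le> emeasure \<theta> {x\<in>space \<theta>. ennreal \<alpha> \<le> Fset F E (Ith K H \<theta>) x}"
    proof (rule emeasure_mono)
      have [measurable]: "Fset F E (Ith K H \<theta>) \<in> borel_measurable \<theta>"
        using ev2 by (simp add: is_evar_def)
      show "{x\<in>space \<theta>. ennreal \<alpha> \<le> Fset F E (Ith K H \<theta>) x} \<in> sets \<theta>"
        by (rule borel_measurable_le) simp_all
      show "{\<omega>\<in>space M. \<exists>R. R \<subseteq> {1..K} \<and> (\<exists>j::nat. j \<ge> 1 \<and>
               gR K H R \<theta> < j \<and> DR F E K R j \<omega> \<ge> ennreal \<alpha>)} \<subseteq> {x\<in>space \<theta>. ennreal \<alpha> \<le> Fset F E (Ith K H \<theta>) x}"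
      proof
        fix x assume "x \<in> {\<omega>\<in>space M. \<exists>R. R \<subseteq> {1..K} \<and> (\<exists>j::nat. j \<ge> 1 \<and>
               gR K H R \<theta> < j \<and> DR F E K R j \<omega> \<ge> ennreal \<alpha>)}"
        then obtain R j where x: "x \<in> space M" "gR K H R \<theta> < j" "DR F E K R j x \<ge> ennreal \<alpha>"
          by blast
        have "ennreal \<alpha> \<le> Fset F E (Ith K H \<theta>) x"
          using order.trans[OF x(3) DR_le[OF x(2)]] .
        then show "x \<in> {x\<in>space \<theta>. ennreal \<alpha> \<le> Fset F E (Ith K H \<theta>) x}"
          using x(1) sp by simp
      qed
    qed
    also have "\<dots> \<le> ennreal (1/\<alpha>)"
      using ev2 a by (intro markov_aux) (auto simp: is_evar_def)
    finally show ?thesis .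
  qed
  show ?thesis using A B C by simp
qed

end
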